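(* Let $A_0\in\mathbb R^{d\times d}$. For all $t\ge0$, $$|e^{-A_0t}|\le\sqrt{L^{A_0}}\,e^{[1-\underline\kappa'(A_0)]t},\qquad\text{where } L^{A_0}:=\inf_{Q_0}\frac{\overline\kappa(Q_0\bar Q_0^\top)}{\underline\kappa(Q_0\bar Q_0^\top)},$$ the infimum being over all invertible $Q_0\in\mathbb C^{d\times d}$ such that $A_0=Q_0J_0Q_0^{-1}$ with $J_0$ the Jordan normal form of $A_0$.
   Context: For $A\in\mathbb R^{d\times d}$: $|A|:=\sup_{|x|=|y|=1,\,x,y\in\mathbb R^d}\langle Ax,y\rangle$ (operator norm); $\underline\kappa'(A)$ denotes the smallest real part of the eigenvalues of $A$. $\bar Q_0$ is the complex conjugate of $Q_0$, so $Q_0\bar Q_0^\top$ is Hermitian positive definite; $\overline\kappa(Q_0\bar Q_0^\top)$ and $\underline\kappa(Q_0\bar Q_0^\top)$ denote its largest and smallest eigenvalues. *)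

theory Defs
  imports Complex_Main "Jordan_Normal_Form.Jordan_Normal_Form"
begin

definition mat_exp :: "real mat \<Rightarrow> real mat" where
  "mat_exp A = mat (dim_row A) (dim_col A)
     (\<lambda>(i,j). \<Sum>k. (A ^\<^sub>m k) $$ (i,j) / fact k)"

definition op_norm :: "real mat \<Rightarrow> real" where
  "op_norm A = Sup {(A *\<^sub>v x) \<bullet> y | x y.
      x \<in> carrier_vec (dim_col A) \<and> y \<in> carrier_vec (dim_row A) \<and> x \<bullet> x = 1 \<and> y \<bullet> y = 1}"

definition kappa_re_min :: "real mat \<Rightarrow> real" where
  "kappa_re_min A = Min {Re c | c. eigenvalue (map_mat complex_of_real A) c}"

definition conj_transpose :: "complex mat \<Rightarrow> complex mat" where
  "conj_transpose Q = mat (dim_col Q) (dim_row Q) (\<lambda>(i,j). cnj (Q $$ (j,i)))"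

text \<open>Largest / smallest eigenvalue of a Hermitian matrix (eigenvalues are real).\<close>
definition kappa_max :: "complex mat \<Rightarrow> real" where
  "kappa_max H = Max {Re c | c. eigenvalue H c}"

definition kappa_min :: "complex mat \<Rightarrow> real" where
  "kappa_min H = Min {Re c | c. eigenvalue H c}"

definition jordan_transforms :: "real mat \<Rightarrow> complex mat set" where
  "jordan_transforms A = {Q. \<exists>n_as Qi.
      similar_mat_wit (map_mat complex_of_real A) (jordan_matrix n_as) Q Qi}"

definition L_const :: "real mat \<Rightarrow> real" where
  "L_const A = Inf {kappa_max (Q * conj_transpose Q) / kappa_min (Q * conj_transpose Q)
                    | Q. Q \<in> jordan_transforms A}"

end

theory Submission
  imports Defs "Jordan_Normal_Form.Jordan_Normal_Form_Existence"
begin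


lemma jm_props:
  fixes n_as :: "(nat \<times> 'a::field) list"
  defines "J \<equiv> jordan_matrix n_as"
  defines "n \<equiv> sum_list (map fst n_as)"
  shows "a < n \<Longrightarrow> b < n \<Longrightarrow> b \<noteq> a \<Longrightarrow> b \<noteq> Suc a \<Longrightarrow> J $$ (a,b) = 0"
    and "Suc a < n \<Longrightarrow> J $$ (a, Suc a) = 0 \<or> J $$ (a, Suc a) = 1"
    and "Suc a < n \<Longrightarrow> J $$ (a, Suc a) = 1 \<Longrightarrow> J $$ (a,a) = J $$ (Suc a, Suc a)"
  unfolding J_def n_def
proof (induct n_as arbitrary: a b)
  case Nil
  { case 1 thus ?case by simp }
  { case 2 thus ?case by simp }
  { case 3 thus ?case by simp }
next
  case (Cons ka n_as)
  obtain k lam where ka: "ka = (k,lam)" by force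
  let ?m = "sum_list (map fst n_as)"
  have J: "jordan_matrix (ka # n_as) = four_block_mat (jordan_block k lam) (0\<^sub>m k ?m) (0\<^sub>m ?m k) (jordan_matrix n_as)"
    unfolding ka by (rule jordan_matrix_Cons)
  { case 1
    then show ?case unfolding J using Cons(1)[of "a - k" "b - k"] by (auto simp: ka)
  }
  { case 2
    then show ?case unfolding J using Cons(2)[of "a - k"] by (auto simp: ka Suc_diff_le)
  }
  { case 3
    then show ?case unfolding J using Cons(3)[of "a - k"] by (auto simp: ka Suc_diff_le split: if_splits)
  }
qed

definition jlink :: "'a::{zero,one} mat \<Rightarrow> nat \<Rightarrow> nat \<Rightarrow> bool" where
  "jlink J a b = (a \<le> b \<and> (\<forall>c. a \<le> c \<and> c < b \<longrightarrow> J $$ (c, Suc c) = 1))"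

lemma sum_two_terms:
  fixes g :: "nat \<Rightarrow> 'a::comm_monoid_add"
  assumes "b < n" and "\<And>c. c < n \<Longrightarrow> c \<noteq> b \<Longrightarrow> Suc c \<noteq> b \<Longrightarrow> g c = 0"
  shows "(\<Sum>c<n. g c) = g b + (if 0 < b then g (b - 1) else 0)"
proof -
  let ?S = "{b} \<union> (if 0 < b then {b - 1} else {})"
  have "(\<Sum>c<n. g c) = (\<Sum>c\<in>?S. g c)"
  proof (rule sum.mono_neutral_right)
    show "\<forall>i\<in>{..<n} - ?S. g i = 0"
    proof
      fix i assume i: "i \<in> {..<n} - ?S"
      then have "i < n" "i \<noteq> b" "Suc i \<noteq> b" by (auto split: if_splits)
      then show "g i = 0" using assms(2) by auto
    qed
  qed (insert assms, auto)
  also have "\<dots> = g b + (if 0 < b then g (b - 1) else 0)"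
    by (cases b, auto simp: add.commute)
  finally show ?thesis .
qed

locale jprops =
  fixes J :: "'a::field mat" and n :: nat
  assumes carr: "J \<in> carrier_mat n n"
  and p1: "\<And>a b. a < n \<Longrightarrow> b < n \<Longrightarrow> b \<noteq> a \<Longrightarrow> b \<noteq> Suc a \<Longrightarrow> J $$ (a,b) = 0"
  and p2: "\<And>a. Suc a < n \<Longrightarrow> J $$ (a, Suc a) = 0 \<or> J $$ (a, Suc a) = 1"
  and p3: "\<And>a. Suc a < n \<Longrightarrow> J $$ (a, Suc a) = 1 \<Longrightarrow> J $$ (a,a) = J $$ (Suc a, Suc a)"
begin

lemma link_diag: "jlink J a b \<Longrightarrow> b < n \<Longrightarrow> J $$ (b,b) = J $$ (a,a)"
proof (induct b)
  case 0 thus ?case by (simp add: jlink_def)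
next
  case (Suc b)
  show ?case
  proof (cases "a = Suc b")
    case False
    with Suc(2) have "jlink J a b" "J $$ (b, Suc b) = 1" unfolding jlink_def by auto
    with Suc p3[of b] show ?thesis by auto
  qed simp
qed

lemma binom_step:
  fixes lam :: "'b::comm_ring_1"
  assumes "1 \<le> m"
  shows "of_nat (k choose m) * lam ^ (k - m) * lam + of_nat (k choose (m - 1)) * lam ^ (k - (m - 1))
    = of_nat (Suc k choose m) * lam ^ (Suc k - m)"
proof -
  obtain m' where m: "m = Suc m'" using assms by (cases m, auto)
  show ?thesis
  proof (cases "m' \<le> k")
    case True
    show ?thesis
    proof (cases "m' = k")
      case True thus ?thesis unfolding m by (simp add: binomial_eq_0)
    next
      case False
      with True have "Suc m' \<le> k" by auto
      then have e: "k - m' = Suc (k - Suc m')" by auto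
      show ?thesis unfolding m using \<open>Suc m' \<le> k\<close> e
        by (simp add: algebra_simps Suc_diff_le)
    qed
  next
    case False
    thus ?thesis unfolding m by (simp add: binomial_eq_0)
  qed
qed

lemma pow_entry:
  assumes "a < n" "b < n"
  shows "(J ^\<^sub>m k) $$ (a,b) = (if jlink J a b then of_nat (k choose (b - a)) * J $$ (a,a) ^ (k - (b - a)) else 0)"
  using assms
proof (induct k arbitrary: b)
  case 0
  then show ?case using carr by (auto simp: jlink_def binomial_eq_0)
next
  case (Suc k)
  have Jk: "J ^\<^sub>m k \<in> carrier_mat n n" using carr by auto
  have "(J ^\<^sub>m Suc k) $$ (a,b) = (\<Sum>c<n. (J ^\<^sub>m k) $$ (a,c) * J $$ (c,b))"
    using Suc(2,3) Jk carr by (simp add: scalar_prod_def atLeast0LessThan)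
  also have "\<dots> = (J ^\<^sub>m k) $$ (a,b) * J $$ (b,b) + (if 0 < b then (J ^\<^sub>m k) $$ (a,b-1) * J $$ (b-1,b) else 0)"
    by (rule sum_two_terms, insert Suc(3) p1, auto)
  also have "\<dots> = (if jlink J a b then of_nat (Suc k choose (b - a)) * J $$ (a,a) ^ (Suc k - (b - a)) else 0)"
  proof (cases "jlink J a b")
    case True
    then have diag: "J $$ (b,b) = J $$ (a,a)" using link_diag Suc by auto
    show ?thesis
    proof (cases "a = b")
      case True
      then show ?thesis using Suc by (auto simp: jlink_def)
    next
      case False
      with True have ab: "a < b" unfolding jlink_def by auto
      then obtain b' where b': "b = Suc b'" by (cases b, auto)
      have l2': "jlink J a b'" using True ab unfolding jlink_def b' by auto
      have one': "J $$ (b', Suc b') = 1" using True ab unfolding jlink_def b' by auto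
      have l2: "jlink J a (b - 1)" using l2' b' by simp
      have one: "J $$ (b - 1, b) = 1" using one' b' by simp
      have "(J ^\<^sub>m k) $$ (a,b) * J $$ (b,b) + (if 0 < b then (J ^\<^sub>m k) $$ (a,b-1) * J $$ (b-1,b) else 0)
        = of_nat (k choose (b - a)) * J $$ (a,a) ^ (k - (b - a)) * J $$ (a,a)
          + of_nat (k choose (b - a - 1)) * J $$ (a,a) ^ (k - (b - a - 1))"
        using Suc(1)[of b] Suc(1)[of "b - 1"] Suc(2,3) True l2 ab diag one by auto
      also have "\<dots> = of_nat (Suc k choose (b - a)) * J $$ (a,a) ^ (Suc k - (b - a))"
        by (rule binom_step, insert ab, auto)
      finally show ?thesis using True by simp
    qed
  next
    case False
    have "(J ^\<^sub>m k) $$ (a,b) = 0" using Suc(1)[of b] Suc(2,3) False by auto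
    moreover have "0 < b \<Longrightarrow> (J ^\<^sub>m k) $$ (a,b-1) * J $$ (b-1,b) = 0"
    proof -
      assume b: "0 < b"
      show ?thesis
      proof (cases "jlink J a (b - 1) \<and> J $$ (b-1,b) = 1")
        case True
        obtain b' where b': "b = Suc b'" using b by (cases b, auto)
        have "jlink J a b" using True unfolding jlink_def b' using less_Suc_eq by auto
        with False show ?thesis by simp
      next
        case F: False
        show ?thesis
        proof (cases "jlink J a (b - 1)")
          case True
          with F have "J $$ (b-1,b) \<noteq> 1" by auto
          with p2[of "b - 1"] b Suc(3) have "J $$ (b-1,b) = 0" by auto
          then show ?thesis by simp
        next
          case False
          then show ?thesis using Suc(1)[of "b - 1"] Suc(2,3) by auto
        qed
      qed
    qed
    ultimately show ?thesis using False by auto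
  qed
  finally show ?case .
qed

end


lemma smult_pow_mat:
  fixes A :: "'a::comm_ring_1 mat"
  assumes "A \<in> carrier_mat n n"
  shows "(c \<cdot>\<^sub>m A) ^\<^sub>m k = (c ^ k) \<cdot>\<^sub>m (A ^\<^sub>m k)"
  using assms
proof (induct k)
  case 0 then show ?case by (intro eq_matI, auto)
next
  case (Suc k)
  have Ak: "A ^\<^sub>m k \<in> carrier_mat n n" using Suc by auto
  have "(c \<cdot>\<^sub>m A) ^\<^sub>m Suc k = ((c ^ k) \<cdot>\<^sub>m (A ^\<^sub>m k)) * (c \<cdot>\<^sub>m A)" using Suc by simp
  also have "\<dots> = (c ^ k) \<cdot>\<^sub>m ((A ^\<^sub>m k) * (c \<cdot>\<^sub>m A))"
    by (rule mult_smult_assoc_mat[OF Ak smult_carrier_mat[OF Suc(2)]])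
  also have "(A ^\<^sub>m k) * (c \<cdot>\<^sub>m A) = c \<cdot>\<^sub>m ((A ^\<^sub>m k) * A)"
    by (rule mult_smult_distrib[OF Ak Suc(2)])
  also have "(c ^ k) \<cdot>\<^sub>m (c \<cdot>\<^sub>m ((A ^\<^sub>m k) * A)) = (c ^ k * c) \<cdot>\<^sub>m (A ^\<^sub>m k * A)"
    by (intro eq_matI, auto)
  finally show ?case by (simp add: mult.commute)
qed

lemma exp_series_shift:
  fixes s lam :: complex
  shows "(\<lambda>k. s ^ k / fact k * (of_nat (k choose m) * lam ^ (k - m))) sums (s ^ m / fact m * exp (s * lam))"
proof -
  let ?f = "\<lambda>k. s ^ k / fact k * (of_nat (k choose m) * lam ^ (k - m))"
  have z: "\<And>k. k < m \<Longrightarrow> ?f k = 0" by (simp add: binomial_eq_0)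
  have eq: "?f (j + m) = s ^ m / fact m * ((s * lam) ^ j /\<^sub>R fact j)" for j
  proof -
    have b: "of_nat ((j + m) choose m) = (fact (j + m) / (fact m * fact j) :: complex)"
      by (simp add: binomial_fact)
    show ?thesis unfolding b
      by (simp add: scaleR_conv_of_real power_add power_mult_distrib field_simps)
  qed
  have "(\<lambda>j. s ^ m / fact m * ((s * lam) ^ j /\<^sub>R fact j)) sums (s ^ m / fact m * exp (s * lam))"
    by (rule sums_mult, rule exp_converges)
  then have "(\<lambda>j. ?f (j + m)) sums (s ^ m / fact m * exp (s * lam))" unfolding eq .
  then show ?thesis using sums_zero_iff_shift[of m ?f, OF z] by simp
qed


lemma cs_real:
  fixes f g :: "'b \<Rightarrow> real"
  assumes "finite A"
  shows "(\<Sum>i\<in>A. f i * g i) \<le> sqrt (\<Sum>i\<in>A. (f i)\<^sup>2) * sqrt (\<Sum>i\<in>A. (g i)\<^sup>2)"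
proof -
  have "0 \<le> (\<Sum>i\<in>A. \<Sum>j\<in>A. (f i * g j - f j * g i)\<^sup>2)" by (intro sum_nonneg, auto)
  also have "\<dots> = (\<Sum>i\<in>A. \<Sum>j\<in>A. (f i)\<^sup>2 * (g j)\<^sup>2 + (f j)\<^sup>2 * (g i)\<^sup>2 - 2 * ((f i * g i) * (f j * g j)))"
    by (intro sum.cong refl, simp add: power2_eq_square algebra_simps)
  also have "\<dots> = (\<Sum>i\<in>A. \<Sum>j\<in>A. (f i)\<^sup>2 * (g j)\<^sup>2) + (\<Sum>i\<in>A. \<Sum>j\<in>A. (g i)\<^sup>2 * (f j)\<^sup>2)
      - 2 * (\<Sum>i\<in>A. \<Sum>j\<in>A. (f i * g i) * (f j * g j))"
    by (simp add: sum_subtractf sum.distrib sum_distrib_left mult.commute)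
  also have "\<dots> = 2 * ((\<Sum>i\<in>A. (f i)\<^sup>2) * (\<Sum>i\<in>A. (g i)\<^sup>2)) - 2 * (\<Sum>i\<in>A. f i * g i)\<^sup>2"
    unfolding sum_product[symmetric] power2_eq_square[of "sum _ _"] by simp
  finally have sq: "(\<Sum>i\<in>A. f i * g i)\<^sup>2 \<le> (\<Sum>i\<in>A. (f i)\<^sup>2) * (\<Sum>i\<in>A. (g i)\<^sup>2)" by simp
  have "(\<Sum>i\<in>A. f i * g i) \<le> sqrt ((\<Sum>i\<in>A. f i * g i)\<^sup>2)" by simp
  also have "\<dots> \<le> sqrt ((\<Sum>i\<in>A. (f i)\<^sup>2) * (\<Sum>i\<in>A. (g i)\<^sup>2))" using sq by (rule real_sqrt_le_mono)
  finally show ?thesis by (simp add: real_sqrt_mult)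
qed

lemma reindex_shift:
  fixes f :: "nat \<Rightarrow> 'a::comm_monoid_add"
  assumes "\<And>b. b < a \<Longrightarrow> f b = 0"
  shows "(\<Sum>b<n. f b) = (\<Sum>m<n. if a + m < n then f (a + m) else 0)"
proof (cases "a \<le> n")
  case False
  then show ?thesis using assms by simp
next
  case True
  have "(\<Sum>m<n. if a + m < n then f (a + m) else 0) = (\<Sum>m\<in>{m\<in>{..<n}. a + m < n}. f (a + m))"
    using sum.inter_filter[of "{..<n}" "\<lambda>m. f (a+m)" "\<lambda>m. a+m<n"] by simp
  also have "{m\<in>{..<n}. a + m < n} = {0..<n-a}" by auto
  also have "(\<Sum>m\<in>{0..<n-a}. f (a + m)) = (\<Sum>b\<in>{0+a..<(n-a)+a}. f b)"
    by (subst sum.shift_bounds_nat_ivl, simp add: add.commute)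
  also have "\<dots> = (\<Sum>b\<in>{a..<n}. f b)" using True by simp
  also have "\<dots> = (\<Sum>b<n. f b)"
    by (rule sum.mono_neutral_left, insert assms, auto)
  finally show ?thesis by simp
qed

lemma partial_exp_le:
  assumes "0 \<le> (t::real)"
  shows "(\<Sum>m<n. t ^ m / fact m) \<le> exp t"
proof -
  have s: "(\<lambda>m. t ^ m / fact m) sums exp t" using exp_converges[of t] by (simp add: divide_inverse mult.commute scaleR_conv_of_real)
  show ?thesis using sum_le_suminf[of "\<lambda>m. t ^ m / fact m" "{..<n}"] s assms
    by (simp add: sums_iff)
qed

definition Mj :: "complex mat \<Rightarrow> complex \<Rightarrow> nat \<Rightarrow> nat \<Rightarrow> complex" where
  "Mj J s a b = (if jlink J a b then s ^ (b - a) / fact (b - a) * exp (s * J $$ (a,a)) else 0)"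

lemma entry_sums:
  fixes s :: complex and J :: "complex mat"
  assumes jp: "jprops J n" and a: "a < n" and b: "b < n"
  shows "(\<lambda>k. ((s \<cdot>\<^sub>m J) ^\<^sub>m k) $$ (a,b) / fact k) sums Mj J s a b"
proof -
  have carr: "J \<in> carrier_mat n n" using jp unfolding jprops_def by auto
  have eq: "((s \<cdot>\<^sub>m J) ^\<^sub>m k) $$ (a,b) / fact k =
    (if jlink J a b then s ^ k / fact k * (of_nat (k choose (b - a)) * J $$ (a,a) ^ (k - (b - a))) else 0)" for k
    using smult_pow_mat[OF carr, of s k] jprops.pow_entry[OF jp a b, of k] a b carr
    by auto
  show ?thesis unfolding eq Mj_def
    using exp_series_shift[of s "b - a" "J $$ (a,a)"] by auto
qed


lemma jordan_bound:
  fixes J :: "complex mat" and u w :: "nat \<Rightarrow> complex" and t kap :: real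
  assumes jp: "jprops J n" and t: "0 \<le> t" and kap: "\<And>a. a < n \<Longrightarrow> kap \<le> Re (J $$ (a,a))"
  shows "cmod (\<Sum>a<n. \<Sum>b<n. cnj (w a) * Mj J (- of_real t) a b * u b)
    \<le> exp ((1 - kap) * t) * (sqrt (\<Sum>a<n. (cmod (u a))\<^sup>2) * sqrt (\<Sum>a<n. (cmod (w a))\<^sup>2))"
proof -
  define s where "s = - complex_of_real t"
  define E where "E a = exp (s * J $$ (a,a))" for a
  define S where "S m a = (if a + m < n \<and> jlink J a (a + m) then u (a + m) else 0)" for m a
  define c where "c m = s ^ m / fact m" for m :: nat
  define K where "K = sqrt (\<Sum>a<n. (cmod (u a))\<^sup>2) * sqrt (\<Sum>a<n. (cmod (w a))\<^sup>2)"
  have K0: "0 \<le> K" unfolding K_def by (intro mult_nonneg_nonneg real_sqrt_ge_zero sum_nonneg, auto)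
  have step1: "(\<Sum>b<n. Mj J s a b * u b) = (\<Sum>m<n. c m * (E a * S m a))" for a
  proof -
    have "(\<Sum>b<n. Mj J s a b * u b) = (\<Sum>m<n. if a + m < n then Mj J s a (a + m) * u (a + m) else 0)"
      by (rule reindex_shift, auto simp: Mj_def jlink_def)
    also have "\<dots> = (\<Sum>m<n. c m * (E a * S m a))"
      by (rule sum.cong, auto simp: Mj_def c_def E_def S_def)
    finally show ?thesis .
  qed
  have "(\<Sum>a<n. \<Sum>b<n. cnj (w a) * Mj J s a b * u b) = (\<Sum>a<n. cnj (w a) * (\<Sum>b<n. Mj J s a b * u b))"
    by (simp add: sum_distrib_left mult.assoc)
  also have "\<dots> = (\<Sum>a<n. \<Sum>m<n. cnj (w a) * (c m * (E a * S m a)))"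
    unfolding step1 by (simp add: sum_distrib_left)
  also have "\<dots> = (\<Sum>m<n. \<Sum>a<n. cnj (w a) * (c m * (E a * S m a)))"
    by (rule sum.swap)
  also have "\<dots> = (\<Sum>m<n. c m * (\<Sum>a<n. cnj (w a) * E a * S m a))"
    by (simp add: sum_distrib_left ac_simps)
  finally have eq: "(\<Sum>a<n. \<Sum>b<n. cnj (w a) * Mj J s a b * u b) = (\<Sum>m<n. c m * (\<Sum>a<n. cnj (w a) * E a * S m a))" .
  have Sb: "(\<Sum>a<n. (cmod (S m a))\<^sup>2) \<le> (\<Sum>a<n. (cmod (u a))\<^sup>2)" for m
  proof -
    have "(\<Sum>a<n. (cmod (S m a))\<^sup>2) \<le> (\<Sum>a<n. if m + a < n then (cmod (u (m + a)))\<^sup>2 else 0)"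
      by (rule sum_mono, auto simp: S_def add.commute)
    also have "\<dots> = (\<Sum>b<n. if m \<le> b then (cmod (u b))\<^sup>2 else 0)"
    proof -
      have "(\<Sum>b<n. if m \<le> b then (cmod (u b))\<^sup>2 else 0) = (\<Sum>a<n. if m + a < n then (if m \<le> m + a then (cmod (u (m + a)))\<^sup>2 else 0) else 0)"
        by (rule reindex_shift, auto)
      also have "\<dots> = (\<Sum>a<n. if m + a < n then (cmod (u (m + a)))\<^sup>2 else 0)"
        by (rule sum.cong, auto)
      finally show ?thesis by simp
    qed
    also have "\<dots> \<le> (\<Sum>a<n. (cmod (u a))\<^sup>2)"
      by (rule sum_mono, auto)
    finally show ?thesis .
  qed
  have Eb: "cmod (E a) \<le> exp (- t * kap)" if a: "a < n" for a
  proof -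
    have "cmod (E a) = exp (- t * Re (J $$ (a,a)))" unfolding E_def s_def by (simp add: norm_exp_eq_Re)
    also have "\<dots> \<le> exp (- t * kap)" using kap[OF a] t by (simp add: mult_left_mono)
    finally show ?thesis .
  qed
  have inner: "cmod (\<Sum>a<n. cnj (w a) * E a * S m a) \<le> exp (- t * kap) * K" for m
  proof -
    have "cmod (\<Sum>a<n. cnj (w a) * E a * S m a) \<le> (\<Sum>a<n. cmod (cnj (w a) * E a * S m a))"
      by (rule norm_sum)
    also have "\<dots> \<le> (\<Sum>a<n. exp (- t * kap) * (cmod (w a) * cmod (S m a)))"
    proof (rule sum_mono)
      fix a assume "a \<in> {..<n}"
      then have "cmod (E a) \<le> exp (- t * kap)" using Eb by auto
      then have "cmod (E a) * (cmod (w a) * cmod (S m a)) \<le> exp (- t * kap) * (cmod (w a) * cmod (S m a))"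
        by (intro mult_right_mono, auto)
      then show "cmod (cnj (w a) * E a * S m a) \<le> exp (- t * kap) * (cmod (w a) * cmod (S m a))"
        by (simp add: norm_mult ac_simps)
    qed
    also have "\<dots> = exp (- t * kap) * (\<Sum>a<n. cmod (w a) * cmod (S m a))"
      by (simp add: sum_distrib_left)
    also have "\<dots> \<le> exp (- t * kap) * (sqrt (\<Sum>a<n. (cmod (w a))\<^sup>2) * sqrt (\<Sum>a<n. (cmod (S m a))\<^sup>2))"
      by (rule mult_left_mono, rule cs_real, auto)
    also have "\<dots> \<le> exp (- t * kap) * K"
    proof -
      have "sqrt (\<Sum>a<n. (cmod (S m a))\<^sup>2) \<le> sqrt (\<Sum>a<n. (cmod (u a))\<^sup>2)"
        using Sb[of m] by simp
      then have "sqrt (\<Sum>a<n. (cmod (w a))\<^sup>2) * sqrt (\<Sum>a<n. (cmod (S m a))\<^sup>2) \<le> K"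
        unfolding K_def by (subst mult.commute, intro mult_right_mono, auto intro: sum_nonneg)
      then show ?thesis by (intro mult_left_mono, auto)
    qed
    finally show ?thesis .
  qed
  have "cmod (\<Sum>m<n. c m * (\<Sum>a<n. cnj (w a) * E a * S m a)) \<le> (\<Sum>m<n. cmod (c m * (\<Sum>a<n. cnj (w a) * E a * S m a)))"
    by (rule norm_sum)
  also have "\<dots> \<le> (\<Sum>m<n. t ^ m / fact m * (exp (- t * kap) * K))"
  proof (rule sum_mono)
    fix m
    have cm: "cmod (c m) = t ^ m / fact m" unfolding c_def s_def using t
      by (simp add: norm_divide norm_power)
    show "cmod (c m * (\<Sum>a<n. cnj (w a) * E a * S m a)) \<le> t ^ m / fact m * (exp (- t * kap) * K)"
      unfolding norm_mult cm using inner[of m] t by (intro mult_left_mono, auto)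
  qed
  also have "\<dots> = (\<Sum>m<n. t ^ m / fact m) * (exp (- t * kap) * K)"
    by (simp add: sum_distrib_right)
  also have "\<dots> \<le> exp t * (exp (- t * kap) * K)"
    by (rule mult_right_mono, rule partial_exp_le[OF t], insert K0, auto)
  also have "\<dots> = exp ((1 - kap) * t) * K"
  proof -
    have "exp t * exp (- t * kap) = exp ((1 - kap) * t)" by (simp add: exp_add[symmetric] algebra_simps)
    then show ?thesis by simp
  qed
  finally show ?thesis unfolding eq[symmetric] s_def K_def .
qed


definition qf :: "nat \<Rightarrow> complex mat \<Rightarrow> (nat \<Rightarrow> complex) \<Rightarrow> complex" where
  "qf n H v = (\<Sum>i<n. cnj (v i) * (\<Sum>j<n. H $$ (i,j) * v j))"

definition nsq :: "nat \<Rightarrow> (nat \<Rightarrow> complex) \<Rightarrow> real" where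
  "nsq n v = (\<Sum>i<n. (cmod (v i))\<^sup>2)"

lemma mult_entry:
  assumes "A \<in> carrier_mat n n" "C \<in> carrier_mat n n" "i < n" "l < n"
  shows "(A * C) $$ (i,l) = (\<Sum>j<n. A $$ (i,j) * C $$ (j,l))"
  using assms by (simp add: scalar_prod_def atLeast0LessThan)

lemma sum_mat_vec:
  fixes A C :: "'a::comm_ring_1 mat"
  assumes "A \<in> carrier_mat n n" "C \<in> carrier_mat n n" "i < n"
  shows "(\<Sum>j<n. A $$ (i,j) * (\<Sum>l<n. C $$ (j,l) * z l)) = (\<Sum>l<n. (A * C) $$ (i,l) * z l)"
proof -
  have "(\<Sum>j<n. A $$ (i,j) * (\<Sum>l<n. C $$ (j,l) * z l)) = (\<Sum>j<n. \<Sum>l<n. A $$ (i,j) * C $$ (j,l) * z l)"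
    by (simp add: sum_distrib_left mult.assoc)
  also have "\<dots> = (\<Sum>l<n. \<Sum>j<n. A $$ (i,j) * C $$ (j,l) * z l)" by (rule sum.swap)
  also have "\<dots> = (\<Sum>l<n. (A * C) $$ (i,l) * z l)"
    using assms by (simp add: scalar_prod_def atLeast0LessThan sum_distrib_right)
  finally show ?thesis .
qed

lemma sum_adj:
  fixes U :: "complex mat"
  shows "(\<Sum>i<n. cnj (\<Sum>k<n. U $$ (i,k) * z k) * y i) = (\<Sum>k<n. cnj (z k) * (\<Sum>i<n. cnj (U $$ (i,k)) * y i))"
proof -
  have "(\<Sum>i<n. cnj (\<Sum>k<n. U $$ (i,k) * z k) * y i) = (\<Sum>i<n. \<Sum>k<n. cnj (z k) * (cnj (U $$ (i,k)) * y i))"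
    by (simp add: cnj_sum sum_distrib_right sum_distrib_left ac_simps)
  also have "\<dots> = (\<Sum>k<n. \<Sum>i<n. cnj (z k) * (cnj (U $$ (i,k)) * y i))" by (rule sum.swap)
  also have "\<dots> = (\<Sum>k<n. cnj (z k) * (\<Sum>i<n. cnj (U $$ (i,k)) * y i))"
    by (simp add: sum_distrib_left)
  finally show ?thesis .
qed

lemma ct_carrier[simp]: "U \<in> carrier_mat n m \<Longrightarrow> conj_transpose U \<in> carrier_mat m n"
  unfolding conj_transpose_def by auto

lemma ct_index[simp]: "i < dim_col U \<Longrightarrow> j < dim_row U \<Longrightarrow> conj_transpose U $$ (i,j) = cnj (U $$ (j,i))"
  "dim_row (conj_transpose U) = dim_col U" "dim_col (conj_transpose U) = dim_row U"
  unfolding conj_transpose_def by auto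

lemma qf_change:
  assumes U: "U \<in> carrier_mat n n" and H: "H \<in> carrier_mat n n"
  shows "qf n H (\<lambda>i. \<Sum>k<n. U $$ (i,k) * z k) = qf n (conj_transpose U * H * U) z"
proof -
  have HU: "H * U \<in> carrier_mat n n" using U H by auto
  have "qf n H (\<lambda>i. \<Sum>k<n. U $$ (i,k) * z k) = (\<Sum>i<n. cnj (\<Sum>k<n. U $$ (i,k) * z k) * (\<Sum>l<n. (H * U) $$ (i,l) * z l))"
    unfolding qf_def by (rule sum.cong, simp, subst sum_mat_vec[OF H U], auto)
  also have "\<dots> = (\<Sum>k<n. cnj (z k) * (\<Sum>i<n. cnj (U $$ (i,k)) * (\<Sum>l<n. (H * U) $$ (i,l) * z l)))"
    by (rule sum_adj)
  also have "\<dots> = (\<Sum>k<n. cnj (z k) * (\<Sum>i<n. conj_transpose U $$ (k,i) * (\<Sum>l<n. (H * U) $$ (i,l) * z l)))"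
    using U by (intro sum.cong refl, simp)
  also have "\<dots> = (\<Sum>k<n. cnj (z k) * (\<Sum>l<n. (conj_transpose U * (H * U)) $$ (k,l) * z l))"
    by (intro sum.cong refl, subst sum_mat_vec[OF ct_carrier[OF U] HU], auto)
  also have "conj_transpose U * (H * U) = conj_transpose U * H * U"
    using U H by (simp add: assoc_mult_mat[of _ n n _ n _ n])
  finally show ?thesis unfolding qf_def .
qed

lemma qf_one: "qf n (1\<^sub>m n) v = of_real (nsq n v)"
  unfolding qf_def nsq_def
proof -
  have "(\<Sum>i<n. cnj (v i) * (\<Sum>j<n. 1\<^sub>m n $$ (i, j) * v j)) = (\<Sum>i<n. cnj (v i) * v i)"
  proof (rule sum.cong, simp)
    fix i assume "i \<in> {..<n}"
    then have "(\<Sum>j<n. 1\<^sub>m n $$ (i, j) * v j) = (\<Sum>j<n. if j = i then v j else 0)"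
      by (intro sum.cong, auto)
    also have "\<dots> = v i" using \<open>i \<in> {..<n}\<close> by (simp add: sum.delta')
    finally show "cnj (v i) * (\<Sum>j<n. 1\<^sub>m n $$ (i, j) * v j) = cnj (v i) * v i" by simp
  qed
  also have "\<dots> = (\<Sum>i<n. of_real ((cmod (v i))\<^sup>2))"
    by (intro sum.cong refl, subst complex_norm_square, simp add: mult.commute)
  also have "\<dots> = of_real (\<Sum>i<n. (cmod (v i))\<^sup>2)" by simp
  finally show "(\<Sum>i<n. cnj (v i) * (\<Sum>j<n. 1\<^sub>m n $$ (i, j) * v j)) = of_real (\<Sum>i<n. (cmod (v i))\<^sup>2)" .
qed


lemma cscalar_real:
  fixes v :: "complex vec"
  shows "v \<bullet>c v = of_real (Re (v \<bullet>c v))" and "0 \<le> Re (v \<bullet>c v)"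
proof -
  have "v \<bullet>c v \<ge> 0" by (rule conjugate_square_ge_0_vec) 
  then show "v \<bullet>c v = of_real (Re (v \<bullet>c v))" "0 \<le> Re (v \<bullet>c v)"
    by (auto simp: less_eq_complex_def complex_eq_iff)
qed

lemma orthonormal_completion:
  fixes x :: "complex vec"
  assumes x: "x \<in> carrier_vec n" and x0: "x \<noteq> 0\<^sub>v n"
  shows "\<exists>U. U \<in> carrier_mat n n \<and> conj_transpose U * U = 1\<^sub>m n \<and> U * conj_transpose U = 1\<^sub>m n
     \<and> (\<exists>\<alpha>. \<forall>k<n. U $$ (k,0) = \<alpha> * x $ k)"
proof -
  interpret cof_vec_space n "TYPE(complex)" .
  define b where "b = basis_completion x"
  note bc = basis_completion[OF x x0, folded b_def]
  have n0: "0 < n" using x x0 by (cases n, auto)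
  from bc(6,7) n0 obtain vs where bv: "b = x # vs"
    by (cases b, auto)
  define ws where "ws = gram_schmidt n b"
  note gs = gram_schmidt_result[OF bc(2) bc(4) bc(5) ws_def]
  have hd: "hd ws = x" unfolding ws_def bv using x by simp
  have len: "length ws = n" using gs bc by auto
  have ws0: "ws ! 0 = x" using hd len n0 by (cases ws, auto)
  have wsc: "i < n \<Longrightarrow> ws ! i \<in> carrier_vec n" for i using gs(3) len by auto
  define r where "r i = 1 / sqrt (Re (ws ! i \<bullet>c ws ! i))" for i
  define U where "U = mat n n (\<lambda>(k,i). of_real (r i) * (ws ! i $ k))"
  have U: "U \<in> carrier_mat n n" unfolding U_def by auto
  have UU: "conj_transpose U * U = 1\<^sub>m n"
  proof (rule eq_matI)
    fix i j assume i: "i < dim_row (1\<^sub>m n)" and j: "j < dim_col (1\<^sub>m n)"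
    then have i: "i < n" and j: "j < n" by auto
    have "(conj_transpose U * U) $$ (i,j) = (\<Sum>k<n. conj_transpose U $$ (i,k) * U $$ (k,j))"
      by (rule mult_entry[OF ct_carrier[OF U] U i j])
    also have "\<dots> = (\<Sum>k<n. of_real (r i * r j) * (ws ! j $ k * cnj (ws ! i $ k)))"
      using i j U unfolding U_def by (intro sum.cong refl, auto)
    also have "\<dots> = of_real (r i * r j) * (ws ! j \<bullet>c ws ! i)"
      using wsc[OF i] by (simp add: scalar_prod_def sum_distrib_left atLeast0LessThan)
    also have "\<dots> = (if i = j then 1 else 0)"
    proof (cases "i = j")
      case False
      then have "ws ! j \<bullet>c ws ! i = 0" using corthogonalD[OF gs(2)] i j len by auto
      then show ?thesis using False by simp
    next
      case True
      have nz: "ws ! i \<bullet>c ws ! i \<noteq> 0" using corthogonalD[OF gs(2)] i len by auto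
      have e: "ws ! i \<bullet>c ws ! i = of_real (Re (ws ! i \<bullet>c ws ! i))" by (rule cscalar_real)
      have pos: "0 < Re (ws ! i \<bullet>c ws ! i)" using nz e cscalar_real(2)[of "ws ! i"]
        by (metis less_eq_real_def of_real_0)
      have "r i * r i * Re (ws ! i \<bullet>c ws ! i) = 1"
        unfolding r_def using pos by (simp add: real_sqrt_mult[symmetric] field_simps)
      then have "of_real (r i * r i * Re (ws ! i \<bullet>c ws ! i)) = (1::complex)" by simp
      then have "of_real (r i * r i) * (ws ! i \<bullet>c ws ! i) = 1"
        by (subst e, simp only: of_real_mult)
      then have "of_real (r i * r j) * (ws ! j \<bullet>c ws ! i) = 1"
        using True by simp
      then show ?thesis using True by simp
    qed
    finally show "(conj_transpose U * U) $$ (i,j) = 1\<^sub>m n $$ (i,j)" using i j by simp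
  qed (insert U, auto)
  have UU': "U * conj_transpose U = 1\<^sub>m n"
    by (rule mat_mult_left_right_inverse[OF ct_carrier[OF U] U UU])
  have "\<forall>k<n. U $$ (k,0) = of_real (r 0) * x $ k"
    unfolding U_def using n0 ws0 by auto
  then show ?thesis using U UU UU' by blast
qed


lemma ct_mult:
  assumes A: "A \<in> carrier_mat n k" and C: "C \<in> carrier_mat k m"
  shows "conj_transpose (A * C) = conj_transpose C * conj_transpose A"
proof (rule eq_matI)
  fix i j assume "i < dim_row (conj_transpose C * conj_transpose A)" "j < dim_col (conj_transpose C * conj_transpose A)"
  then have i: "i < m" and j: "j < n" using A C by auto
  show "conj_transpose (A * C) $$ (i,j) = (conj_transpose C * conj_transpose A) $$ (i,j)"
    using A C i j by (simp add: scalar_prod_def cnj_sum mult.commute)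
qed (insert A C, auto)

lemma ct_ct[simp]: "conj_transpose (conj_transpose U) = U"
  by (rule eq_matI, auto)

lemma ct_one[simp]: "conj_transpose (1\<^sub>m n) = 1\<^sub>m n"
  by (rule eq_matI, auto)

lemma identity_sum: fixes v :: "nat \<Rightarrow> complex" shows "i < n \<Longrightarrow> (\<Sum>j<n. 1\<^sub>m n $$ (i,j) * v j) = v i"
proof -
  assume i: "i < n"
  have "(\<Sum>j<n. 1\<^sub>m n $$ (i, j) * v j) = (\<Sum>j<n. if j = i then v j else 0)"
    using i by (intro sum.cong, auto)
  also have "\<dots> = v i" using i by (simp add: sum.delta')
  finally show ?thesis .
qed

lemma rayleigh_upper:
  assumes "H \<in> carrier_mat n n" and "conj_transpose H = H"
    and "\<And>e. eigenvalue H e \<Longrightarrow> Re e \<le> c"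
  shows "Re (qf n H v) \<le> c * nsq n v"
  using assms
proof (induct n arbitrary: H v)
  case 0
  then show ?case by (simp add: qf_def nsq_def)
next
  case (Suc m H v)
  let ?n = "Suc m"
  note H = Suc(2)
  note herm = Suc(3)
  note evc = Suc(4)
  from char_poly_factorized[OF H] obtain as where cp: "char_poly H = (\<Prod>a\<leftarrow>as. [:- a, 1:])"
    and las: "length as = ?n" by auto
  then obtain e as' where as: "as = e # as'" by (cases as, auto)
  have "poly (char_poly H) e = 0" unfolding cp as by (simp add: poly_prod_list)
  then have ev: "eigenvalue H e" using eigenvalue_root_char_poly[OF H] by simp
  then obtain x where "eigenvector H x e" unfolding eigenvalue_def by auto
  then have x: "x \<in> carrier_vec ?n" and x0: "x \<noteq> 0\<^sub>v ?n" and Hx: "H *\<^sub>v x = e \<cdot>\<^sub>v x"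
    unfolding eigenvector_def using H by auto
  from orthonormal_completion[OF x x0] obtain U \<alpha> where U: "U \<in> carrier_mat ?n ?n"
    and UU: "conj_transpose U * U = 1\<^sub>m ?n" and UU': "U * conj_transpose U = 1\<^sub>m ?n"
    and col0: "\<And>k. k < ?n \<Longrightarrow> U $$ (k,0) = \<alpha> * x $ k" by blast
  define B where "B = conj_transpose U * H * U"
  have B: "B \<in> carrier_mat ?n ?n" unfolding B_def using U H by auto
  have HU: "H * U \<in> carrier_mat ?n ?n" using H U by auto
  have UH: "conj_transpose U * H \<in> carrier_mat ?n ?n" using U H by auto
  have Bherm: "conj_transpose B = B"
  proof -
    have "conj_transpose B = conj_transpose U * conj_transpose (conj_transpose U * H)"
      unfolding B_def by (rule ct_mult[OF UH U])
    also have "conj_transpose (conj_transpose U * H) = conj_transpose H * U"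
      using ct_mult[OF ct_carrier[OF U] H] by simp
    also have "conj_transpose U * (conj_transpose H * U) = B"
      unfolding herm B_def using U H by (simp add: assoc_mult_mat[of _ ?n ?n _ ?n _ ?n])
    finally show ?thesis .
  qed
  have HUcol: "(H * U) $$ (k,0) = e * U $$ (k,0)" if k: "k < ?n" for k
  proof -
    have "(H * U) $$ (k,0) = (\<Sum>l<?n. H $$ (k,l) * U $$ (l,0))" by (rule mult_entry[OF H U k], simp)
    also have "\<dots> = (\<Sum>l<?n. \<alpha> * (H $$ (k,l) * x $ l))"
      by (intro sum.cong refl, simp add: col0)
    also have "\<dots> = \<alpha> * (\<Sum>l<?n. H $$ (k,l) * x $ l)"
      by (rule sum_distrib_left[symmetric])
    also have "(\<Sum>l<?n. H $$ (k,l) * x $ l) = (H *\<^sub>v x) $ k"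
      using H x k by (simp add: scalar_prod_def atLeast0LessThan)
    also have "\<dots> = e * x $ k" using Hx x k by simp
    finally show ?thesis using col0[OF k] by simp
  qed
  have Bcol: "B $$ (i,0) = (if i = 0 then e else 0)" if i: "i < ?n" for i
  proof -
    have "B $$ (i,0) = (conj_transpose U * (H * U)) $$ (i,0)"
      unfolding B_def using U H by (simp add: assoc_mult_mat[of _ ?n ?n _ ?n _ ?n])
    also have "\<dots> = (\<Sum>k<?n. conj_transpose U $$ (i,k) * (H * U) $$ (k,0))"
      by (rule mult_entry[OF ct_carrier[OF U] HU i], simp)
    also have "\<dots> = (\<Sum>k<?n. e * (conj_transpose U $$ (i,k) * U $$ (k,0)))"
      by (intro sum.cong refl, simp add: HUcol)
    also have "\<dots> = e * (\<Sum>k<?n. conj_transpose U $$ (i,k) * U $$ (k,0))"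
      by (rule sum_distrib_left[symmetric])
    also have "(\<Sum>k<?n. conj_transpose U $$ (i,k) * U $$ (k,0)) = (conj_transpose U * U) $$ (i,0)"
      by (rule mult_entry[OF ct_carrier[OF U] U i, symmetric], simp)
    also have "\<dots> = (if i = 0 then 1 else 0)" unfolding UU using i by simp
    finally show ?thesis by simp
  qed
  have Bsym: "B $$ (j,i) = cnj (B $$ (i,j))" if "i < ?n" "j < ?n" for i j
  proof -
    have "B $$ (j,i) = conj_transpose B $$ (j,i)" using Bherm by simp
    also have "\<dots> = cnj (B $$ (i,j))" using B that by simp
    finally show ?thesis .
  qed
  have Brow: "B $$ (0,j) = (if j = 0 then cnj e else 0)" if j: "j < ?n" for j
    using Bsym[OF j, of 0] Bcol[OF j] by auto
  have ereal: "cnj e = e" using Brow[of 0] Bcol[of 0] by simp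
  define B3 where "B3 = mat m m (\<lambda>(i,j). B $$ (Suc i, Suc j))"
  have B3: "B3 \<in> carrier_mat m m" unfolding B3_def by simp
  have B3herm: "conj_transpose B3 = B3"
  proof (rule eq_matI)
    fix i j assume "i < dim_row B3" "j < dim_col B3"
    then have i: "i < m" and j: "j < m" using B3 by auto
    show "conj_transpose B3 $$ (i,j) = B3 $$ (i,j)"
      using Bsym[of "Suc j" "Suc i"] i j unfolding B3_def by simp
  qed (unfold B3_def, auto)
  have Bblock: "B = four_block_mat (mat 1 1 (\<lambda>_. e)) (0\<^sub>m 1 m) (0\<^sub>m m 1) B3"
  proof (rule eq_matI)
    fix i j assume "i < dim_row (four_block_mat (mat 1 1 (\<lambda>_. e)) (0\<^sub>m 1 m) (0\<^sub>m m 1) B3)"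
      "j < dim_col (four_block_mat (mat 1 1 (\<lambda>_. e)) (0\<^sub>m 1 m) (0\<^sub>m m 1) B3)"
    then have i: "i < ?n" and j: "j < ?n" using B3 by auto
    show "B $$ (i,j) = four_block_mat (mat 1 1 (\<lambda>_. e)) (0\<^sub>m 1 m) (0\<^sub>m m 1) B3 $$ (i,j)"
      using i j B3 Bcol[OF i] Brow[OF j] ereal unfolding B3_def
      by (cases i; cases j; auto)
  qed (insert B B3, auto)
  have simHB: "similar_mat H B"
    unfolding similar_mat_def
  proof (intro exI)
    show "similar_mat_wit H B U (conj_transpose U)"
    proof (rule similar_mat_witI[OF UU' UU _ H B U ct_carrier[OF U]])
      have Ut: "conj_transpose U \<in> carrier_mat ?n ?n" using U by simp
      have "U * B = U * ((conj_transpose U * H) * U)" unfolding B_def ..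
      also have "\<dots> = (U * (conj_transpose U * H)) * U"
        by (rule assoc_mult_mat[symmetric, OF U UH U])
      also have "U * (conj_transpose U * H) = (U * conj_transpose U) * H"
        by (rule assoc_mult_mat[symmetric, OF U Ut H])
      finally have UB: "U * B = H * U" unfolding UU' using H by simp
      have "U * B * conj_transpose U = H * (U * conj_transpose U)"
        unfolding UB by (rule assoc_mult_mat[OF H U Ut])
      then show "H = U * B * conj_transpose U" unfolding UU' using H by simp
    qed
  qed
  have ev3: "Re \<mu> \<le> c" if "eigenvalue B3 \<mu>" for \<mu>
  proof -
    have "poly (char_poly B3) \<mu> = 0" using that eigenvalue_root_char_poly[OF B3] by simp
    moreover have "char_poly H = char_poly (mat 1 1 (\<lambda>_. e)) * char_poly B3"
      unfolding char_poly_similar[OF simHB] Bblock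
      by (rule char_poly_four_block_zeros_col[OF _ _ B3], auto)
    ultimately have "poly (char_poly H) \<mu> = 0" by simp
    then have "eigenvalue H \<mu>" using eigenvalue_root_char_poly[OF H] by simp
    then show ?thesis by (rule evc)
  qed
  define z where "z k = (\<Sum>i<?n. conj_transpose U $$ (k,i) * v i)" for k
  have vz: "v i = (\<Sum>k<?n. U $$ (i,k) * z k)" if i: "i < ?n" for i
  proof -
    have "(\<Sum>k<?n. U $$ (i,k) * z k) = (\<Sum>j<?n. (U * conj_transpose U) $$ (i,j) * v j)"
      unfolding z_def by (rule sum_mat_vec[OF U ct_carrier[OF U] i])
    also have "\<dots> = v i" unfolding UU' by (rule identity_sum[OF i])
    finally show ?thesis by simp
  qed
  have qfv: "qf ?n H v = qf ?n B z"
  proof -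
    have "qf ?n H v = qf ?n H (\<lambda>i. \<Sum>k<?n. U $$ (i,k) * z k)"
      unfolding qf_def by (intro sum.cong refl, simp add: vz)
    also have "\<dots> = qf ?n B z" unfolding B_def by (rule qf_change[OF U H])
    finally show ?thesis .
  qed
  have nsqv: "nsq ?n v = nsq ?n z"
  proof -
    have "of_real (nsq ?n v) = qf ?n (1\<^sub>m ?n) v" by (simp add: qf_one)
    also have "\<dots> = qf ?n (1\<^sub>m ?n) (\<lambda>i. \<Sum>k<?n. U $$ (i,k) * z k)"
      unfolding qf_def by (intro sum.cong refl, simp add: vz)
    also have "\<dots> = qf ?n (conj_transpose U * 1\<^sub>m ?n * U) z" by (rule qf_change[OF U], simp)
    also have "conj_transpose U * 1\<^sub>m ?n * U = 1\<^sub>m ?n" using U UU by simp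
    also have "qf ?n (1\<^sub>m ?n) z = of_real (nsq ?n z)" by (simp add: qf_one)
    finally show ?thesis by simp
  qed
  have qfB: "qf ?n B z = cnj (z 0) * e * z 0 + qf m B3 (\<lambda>k. z (Suc k))"
  proof -
    have "qf ?n B z = cnj (z 0) * (B $$ (0,0) * z 0 + (\<Sum>j<m. B $$ (0, Suc j) * z (Suc j)))
       + (\<Sum>i<m. cnj (z (Suc i)) * (B $$ (Suc i, 0) * z 0 + (\<Sum>j<m. B $$ (Suc i, Suc j) * z (Suc j))))"
      unfolding qf_def by (simp only: sum.lessThan_Suc_shift)
    also have "\<dots> = cnj (z 0) * e * z 0 + (\<Sum>i<m. cnj (z (Suc i)) * (\<Sum>j<m. B3 $$ (i, j) * z (Suc j)))"
      using Bcol Brow ereal unfolding B3_def by simp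
    finally show ?thesis unfolding qf_def .
  qed
  have nsqz: "nsq ?n z = (cmod (z 0))\<^sup>2 + nsq m (\<lambda>k. z (Suc k))"
    unfolding nsq_def by (simp only: sum.lessThan_Suc_shift)
  have IH: "Re (qf m B3 (\<lambda>k. z (Suc k))) \<le> c * nsq m (\<lambda>k. z (Suc k))"
    by (rule Suc(1)[OF B3 B3herm ev3])
  have e0: "Re (cnj (z 0) * e * z 0) = Re e * (cmod (z 0))\<^sup>2"
  proof -
    have a: "cnj (z 0) * z 0 = of_real ((cmod (z 0))\<^sup>2)"
      by (subst complex_norm_square, simp add: mult.commute)
    have "cnj (z 0) * e * z 0 = e * (cnj (z 0) * z 0)" by (simp add: ac_simps)
    also have "\<dots> = e * of_real ((cmod (z 0))\<^sup>2)" unfolding a ..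
    finally have b: "cnj (z 0) * e * z 0 = e * of_real ((cmod (z 0))\<^sup>2)" .
    show ?thesis unfolding b by simp
  qed
  have "Re e \<le> c" by (rule evc[OF ev])
  then have "Re e * (cmod (z 0))\<^sup>2 \<le> c * (cmod (z 0))\<^sup>2" by (intro mult_right_mono, auto)
  then show ?case unfolding qfv nsqv qfB nsqz using IH e0 by (simp add: algebra_simps)
qed


lemma rayleigh_lower:
  assumes H: "H \<in> carrier_mat n n" and herm: "conj_transpose H = H"
    and ev: "\<And>e. eigenvalue H e \<Longrightarrow> c \<le> Re e"
  shows "c * nsq n v \<le> Re (qf n H v)"
proof -
  have mH: "- H \<in> carrier_mat n n" using H by auto
  have mherm: "conj_transpose (- H) = - H"
  proof (rule eq_matI)
    fix i j assume "i < dim_row (- H)" "j < dim_col (- H)"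
    then have i: "i < n" and j: "j < n" using H by auto
    have "conj_transpose H $$ (i,j) = H $$ (i,j)" using herm by simp
    then show "conj_transpose (- H) $$ (i,j) = (- H) $$ (i,j)" using H i j by simp
  qed (insert H, auto)
  have mev: "Re e \<le> - c" if "eigenvalue (- H) e" for e
  proof -
    from that obtain x where "eigenvector (- H) x e" unfolding eigenvalue_def by auto
    then have x: "x \<in> carrier_vec n" and x0: "x \<noteq> 0\<^sub>v n" and Hx: "(- H) *\<^sub>v x = e \<cdot>\<^sub>v x"
      unfolding eigenvector_def using H by auto
    have "H *\<^sub>v x = (- e) \<cdot>\<^sub>v x"
    proof (rule eq_vecI)
      fix i assume "i < dim_vec ((- e) \<cdot>\<^sub>v x)"
      then have i: "i < n" using x by auto
      have "((- H) *\<^sub>v x) $ i = (e \<cdot>\<^sub>v x) $ i" using Hx by simp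
      then show "(H *\<^sub>v x) $ i = ((- e) \<cdot>\<^sub>v x) $ i" using H x i
        by (simp add: scalar_prod_def sum_negf minus_equation_iff[of "sum _ _"])
    qed (insert H x, auto)
    then have "eigenvalue H (- e)" unfolding eigenvalue_def eigenvector_def using x x0 H by auto
    then show ?thesis using ev by force
  qed
  have "Re (qf n (- H) v) \<le> (- c) * nsq n v" by (rule rayleigh_upper[OF mH mherm mev])
  moreover have "qf n (- H) v = - qf n H v"
    unfolding qf_def using H by (simp add: sum_negf)
  ultimately show ?thesis by simp
qed

lemma finite_eig:
  assumes H: "(H :: complex mat) \<in> carrier_mat n n"
  shows "finite {Re c | c. eigenvalue H c}"
proof -
  have "char_poly H \<noteq> 0" using degree_monic_char_poly[OF H] by auto
  then have "finite {x. poly (char_poly H) x = 0}" by (rule poly_roots_finite)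
  moreover have "{c. eigenvalue H c} = {x. poly (char_poly H) x = 0}"
    using eigenvalue_root_char_poly[OF H] by auto
  ultimately have "finite {c. eigenvalue H c}" by simp
  then have "finite (Re ` {c. eigenvalue H c})" by simp
  moreover have "{Re c | c. eigenvalue H c} = Re ` {c. eigenvalue H c}" by auto
  ultimately show ?thesis by simp
qed

lemma exists_eig:
  assumes H: "(H :: complex mat) \<in> carrier_mat n n" and n: "0 < n"
  shows "\<exists>c. eigenvalue H c"
proof -
  from char_poly_factorized[OF H] obtain as where cp: "char_poly H = (\<Prod>a\<leftarrow>as. [:- a, 1:])"
    and las: "length as = n" by auto
  then obtain e as' where as: "as = e # as'" using n by (cases as, auto)
  have "poly (char_poly H) e = 0" unfolding cp as by (simp add: poly_prod_list)
  then show ?thesis using eigenvalue_root_char_poly[OF H] by auto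
qed

lemma kmax_bound:
  assumes H: "H \<in> carrier_mat n n" and herm: "conj_transpose H = H"
  shows "Re (qf n H v) \<le> kappa_max H * nsq n v"
  by (rule rayleigh_upper[OF H herm], unfold kappa_max_def, rule Max_ge[OF finite_eig[OF H]], auto)

lemma kmin_bound:
  assumes H: "H \<in> carrier_mat n n" and herm: "conj_transpose H = H"
  shows "kappa_min H * nsq n v \<le> Re (qf n H v)"
  by (rule rayleigh_lower[OF H herm], unfold kappa_min_def, rule Min_le[OF finite_eig[OF H]], auto)


lemma nsq_as_sum: "of_real (nsq n u) = (\<Sum>i<n. cnj (u i) * u i)"
proof -
  have "of_real (nsq n u) = qf n (1\<^sub>m n) u" by (simp add: qf_one)
  also have "\<dots> = (\<Sum>i<n. cnj (u i) * u i)" unfolding qf_def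
    by (intro sum.cong refl, subst identity_sum, auto)
  finally show ?thesis .
qed

lemma nsq_nonneg: "0 \<le> nsq n u" unfolding nsq_def by (intro sum_nonneg, auto)

locale qsetup =
  fixes Q Qi :: "complex mat" and d :: nat
  assumes Q: "Q \<in> carrier_mat d d" and Qi: "Qi \<in> carrier_mat d d"
    and QQi: "Q * Qi = 1\<^sub>m d" and QiQ: "Qi * Q = 1\<^sub>m d"
begin

definition "H = Q * conj_transpose Q"

lemma H: "H \<in> carrier_mat d d" unfolding H_def using Q by auto

lemma Hherm: "conj_transpose H = H"
  unfolding H_def using ct_mult[OF Q ct_carrier[OF Q]] by simp

lemma qfH: "qf d H z = of_real (nsq d (\<lambda>k. \<Sum>i<d. conj_transpose Q $$ (k,i) * z i))"
proof -
  have "qf d (1\<^sub>m d) (\<lambda>k. \<Sum>i<d. conj_transpose Q $$ (k,i) * z i)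
     = qf d (conj_transpose (conj_transpose Q) * 1\<^sub>m d * conj_transpose Q) z"
    by (rule qf_change[OF ct_carrier[OF Q]], simp)
  also have "conj_transpose (conj_transpose Q) * 1\<^sub>m d * conj_transpose Q = H"
    unfolding H_def using Q by simp
  finally show ?thesis by (simp add: qf_one)
qed

lemma ctQQi: "conj_transpose Q * conj_transpose Qi = 1\<^sub>m d"
  using ct_mult[OF Qi Q] QiQ by simp

lemma ctQiQ: "conj_transpose Qi * conj_transpose Q = 1\<^sub>m d"
  using ct_mult[OF Q Qi] QQi by simp

lemma kmin_pos: "0 < kappa_min H" if d: "0 < d"
proof -
  have pos: "0 < Re e" if ev: "eigenvalue H e" for e
  proof -
    from ev obtain x where "eigenvector H x e" unfolding eigenvalue_def by auto
    then have x: "x \<in> carrier_vec d" and x0: "x \<noteq> 0\<^sub>v d" and Hx: "H *\<^sub>v x = e \<cdot>\<^sub>v x"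
      unfolding eigenvector_def using H by auto
    define v where "v i = x $ i" for i
    define w where "w k = (\<Sum>i<d. conj_transpose Q $$ (k,i) * v i)" for k
    have "qf d H v = (\<Sum>i<d. cnj (v i) * (e * v i))"
      unfolding qf_def
    proof (intro sum.cong refl)
      fix i assume "i \<in> {..<d}"
      then have i: "i < d" by auto
      have "(\<Sum>j<d. H $$ (i,j) * v j) = (H *\<^sub>v x) $ i"
        using H x i by (simp add: scalar_prod_def atLeast0LessThan v_def)
      also have "\<dots> = e * v i" using Hx x i by (simp add: v_def)
      finally show "cnj (v i) * (\<Sum>j<d. H $$ (i,j) * v j) = cnj (v i) * (e * v i)" by simp
    qed
    also have "\<dots> = e * (\<Sum>i<d. cnj (v i) * v i)" by (simp add: sum_distrib_left ac_simps)
    also have "\<dots> = e * of_real (nsq d v)" by (simp add: nsq_as_sum)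
    finally have eq: "of_real (nsq d w) = e * of_real (nsq d v)" unfolding qfH w_def by simp
    obtain i where i: "i < d" and xi: "x $ i \<noteq> 0"
      using x x0 by (metis carrier_vecD eq_vecI index_zero_vec(1,2))
    have "0 < (cmod (v i))\<^sup>2" using xi by (simp add: v_def)
    also have "\<dots> \<le> nsq d v" unfolding nsq_def
      by (rule member_le_sum, insert i, auto)
    finally have nv: "0 < nsq d v" .
    have "v j = (\<Sum>k<d. conj_transpose Qi $$ (j,k) * w k)" if j: "j < d" for j
    proof -
      have "(\<Sum>k<d. conj_transpose Qi $$ (j,k) * w k) = (\<Sum>l<d. (conj_transpose Qi * conj_transpose Q) $$ (j,l) * v l)"
        unfolding w_def by (rule sum_mat_vec[OF ct_carrier[OF Qi] ct_carrier[OF Q] j])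
      also have "\<dots> = v j" unfolding ctQiQ by (rule identity_sum[OF j])
      finally show ?thesis by simp
    qed
    then have "nsq d w \<noteq> 0"
    proof -
      assume vw: "\<And>j. j < d \<Longrightarrow> v j = (\<Sum>k<d. conj_transpose Qi $$ (j,k) * w k)"
      show ?thesis
      proof
        assume "nsq d w = 0"
        then have "\<forall>k\<in>{..<d}. (cmod (w k))\<^sup>2 = 0" unfolding nsq_def
          by (subst sum_nonneg_eq_0_iff[symmetric], auto)
        then have "\<And>k. k < d \<Longrightarrow> w k = 0" by auto
        then have "v i = 0" using vw[OF i] by simp
        then show False using xi by (simp add: v_def)
      qed
    qed
    then have nw: "0 < nsq d w" using nsq_nonneg[of d w] by auto
    have "Re (e * of_real (nsq d v)) = Re e * nsq d v" by simp
    with eq have "nsq d w = Re e * nsq d v" by (metis Re_complex_of_real)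
    with nw nv show ?thesis by (metis zero_less_mult_pos2)
  qed
  have fin: "finite {Re c | c. eigenvalue H c}" by (rule finite_eig[OF H])
  obtain c where "eigenvalue H c" using exists_eig[OF H d] by auto
  then have ne: "{Re c | c. eigenvalue H c} \<noteq> {}" by auto
  show ?thesis unfolding kappa_min_def
    using Min_in[OF fin ne] pos by auto
qed

end


context qsetup
begin

lemma w_bound: "nsq d (\<lambda>a. \<Sum>i<d. conj_transpose Q $$ (a,i) * y i) \<le> kappa_max H * nsq d y"
  using kmax_bound[OF H Hherm, of y] unfolding qfH by simp

lemma u_bound:
  fixes x :: "nat \<Rightarrow> complex"
  defines "u \<equiv> \<lambda>b. \<Sum>j<d. Qi $$ (b,j) * x j"
  shows "kappa_min H * nsq d u \<le> nsq d x"
proof (cases "kappa_min H \<le> 0")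
  case True
  then show ?thesis using nsq_nonneg[of d u] nsq_nonneg[of d x]
    by (meson dual_order.trans mult_nonpos_nonneg)
next
  case False
  then have kpos: "0 < kappa_min H" by simp
  define v where "v j = (\<Sum>b<d. conj_transpose Qi $$ (j,b) * u b)" for j
  have cQv: "(\<Sum>i<d. conj_transpose Q $$ (k,i) * v i) = u k" if k: "k < d" for k
  proof -
    have "(\<Sum>i<d. conj_transpose Q $$ (k,i) * v i) = (\<Sum>b<d. (conj_transpose Q * conj_transpose Qi) $$ (k,b) * u b)"
      unfolding v_def by (rule sum_mat_vec[OF ct_carrier[OF Q] ct_carrier[OF Qi] k])
    also have "\<dots> = u k" unfolding ctQQi by (rule identity_sum[OF k])
    finally show ?thesis .
  qed
  have "qf d H v = of_real (nsq d (\<lambda>k. \<Sum>i<d. conj_transpose Q $$ (k,i) * v i))" by (rule qfH)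
  also have "nsq d (\<lambda>k. \<Sum>i<d. conj_transpose Q $$ (k,i) * v i) = nsq d u"
    unfolding nsq_def by (intro sum.cong refl, simp add: cQv)
  finally have qv: "qf d H v = of_real (nsq d u)" .
  have l1: "kappa_min H * nsq d v \<le> nsq d u"
    using kmin_bound[OF H Hherm, of v] unfolding qv by simp
  have "of_real (nsq d u) = (\<Sum>b<d. cnj (u b) * u b)" by (rule nsq_as_sum)
  also have "\<dots> = (\<Sum>b<d. cnj (\<Sum>j<d. Qi $$ (b,j) * x j) * u b)" unfolding u_def ..
  also have "\<dots> = (\<Sum>j<d. cnj (x j) * (\<Sum>b<d. cnj (Qi $$ (b,j)) * u b))" by (rule sum_adj)
  also have "\<dots> = (\<Sum>j<d. cnj (x j) * v j)"
    unfolding v_def using Qi by (intro sum.cong refl, auto intro!: sum.cong)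
  finally have eq: "of_real (nsq d u) = (\<Sum>j<d. cnj (x j) * v j)" .
  have "nsq d u = cmod (of_real (nsq d u))" using nsq_nonneg[of d u] by simp
  also have "\<dots> \<le> (\<Sum>j<d. cmod (x j) * cmod (v j))" unfolding eq
    by (rule order.trans[OF norm_sum], simp add: norm_mult)
  also have "\<dots> \<le> sqrt (\<Sum>j<d. (cmod (x j))\<^sup>2) * sqrt (\<Sum>j<d. (cmod (v j))\<^sup>2)" by (rule cs_real, simp)
  finally have cs: "nsq d u \<le> sqrt (nsq d x) * sqrt (nsq d v)" unfolding nsq_def .
  have "(nsq d u)\<^sup>2 \<le> (sqrt (nsq d x) * sqrt (nsq d v))\<^sup>2"
    using cs nsq_nonneg[of d u] by (intro power_mono, auto)
  also have "\<dots> = nsq d x * nsq d v" using nsq_nonneg[of d x] nsq_nonneg[of d v]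
    by (simp add: power_mult_distrib)
  finally have sq: "(nsq d u)\<^sup>2 \<le> nsq d x * nsq d v" .
  have "kappa_min H * (nsq d u)\<^sup>2 \<le> kappa_min H * (nsq d x * nsq d v)"
    using sq kpos by (intro mult_left_mono, auto)
  also have "\<dots> = nsq d x * (kappa_min H * nsq d v)" by simp
  also have "\<dots> \<le> nsq d x * nsq d u" using l1 nsq_nonneg[of d x] by (intro mult_left_mono, auto)
  finally have fin: "kappa_min H * (nsq d u)\<^sup>2 \<le> nsq d x * nsq d u" .
  show ?thesis
  proof (cases "nsq d u = 0")
    case True then show ?thesis using nsq_nonneg[of d x] by simp
  next
    case False
    then have "0 < nsq d u" using nsq_nonneg[of d u] by simp
    then show ?thesis using fin by (simp add: power2_eq_square mult.assoc[symmetric] mult_le_cancel_right_pos)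
  qed
qed

end


lemma map_smult_real: "map_mat complex_of_real (c \<cdot>\<^sub>m A) = of_real c \<cdot>\<^sub>m map_mat complex_of_real A"
  by (rule eq_matI, auto)

lemma triple_entry:
  assumes "Q \<in> carrier_mat d d" "X \<in> carrier_mat d d" "Qi \<in> carrier_mat d d" "i < d" "j < d"
  shows "(Q * X * Qi) $$ (i,j) = (\<Sum>b<d. (\<Sum>a<d. Q $$ (i,a) * X $$ (a,b)) * Qi $$ (b,j))"
proof -
  have QX: "Q * X \<in> carrier_mat d d" using assms by auto
  have "(Q * X * Qi) $$ (i,j) = (\<Sum>b<d. (Q * X) $$ (i,b) * Qi $$ (b,j))"
    by (rule mult_entry[OF QX assms(3,4,5)])
  also have "\<dots> = (\<Sum>b<d. (\<Sum>a<d. Q $$ (i,a) * X $$ (a,b)) * Qi $$ (b,j))"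
    by (intro sum.cong refl, subst mult_entry[OF assms(1,2,4)], auto)
  finally show ?thesis .
qed

lemma exp_entry:
  fixes A0 :: "real mat" and c :: real
  assumes A0: "A0 \<in> carrier_mat d d"
    and sim: "similar_mat_wit (map_mat complex_of_real A0) J Q Qi"
    and jp: "jprops J d" and i: "i < d" and j: "j < d"
  shows "complex_of_real (mat_exp (c \<cdot>\<^sub>m A0) $$ (i,j))
     = (\<Sum>b<d. (\<Sum>a<d. Q $$ (i,a) * Mj J (of_real c) a b) * Qi $$ (b,j))"
proof -
  let ?Ac = "map_mat complex_of_real A0"
  have Ac: "?Ac \<in> carrier_mat d d" using A0 by auto
  from similar_mat_witD2[OF Ac sim] have J: "J \<in> carrier_mat d d" and Q: "Q \<in> carrier_mat d d"
    and Qi: "Qi \<in> carrier_mat d d" by auto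
  have sim2: "similar_mat_wit (of_real c \<cdot>\<^sub>m ?Ac) (of_real c \<cdot>\<^sub>m J) Q Qi"
    by (rule similar_mat_wit_smult[OF sim])
  define g where "g k = ((c \<cdot>\<^sub>m A0) ^\<^sub>m k) $$ (i,j) / fact k" for k
  define S where "S = (\<Sum>b<d. (\<Sum>a<d. Q $$ (i,a) * Mj J (of_real c) a b) * Qi $$ (b,j))"
  have gk: "complex_of_real (g k) = (\<Sum>b<d. (\<Sum>a<d. Q $$ (i,a) * (((of_real c \<cdot>\<^sub>m J) ^\<^sub>m k) $$ (a,b) / fact k)) * Qi $$ (b,j))" for k
  proof -
    have cA: "c \<cdot>\<^sub>m A0 \<in> carrier_mat d d" using A0 by auto
    have "complex_of_real (((c \<cdot>\<^sub>m A0) ^\<^sub>m k) $$ (i,j)) = (map_mat complex_of_real ((c \<cdot>\<^sub>m A0) ^\<^sub>m k)) $$ (i,j)"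
      using i j A0 by simp
    also have "map_mat complex_of_real ((c \<cdot>\<^sub>m A0) ^\<^sub>m k) = (map_mat complex_of_real (c \<cdot>\<^sub>m A0)) ^\<^sub>m k"
      by (rule of_real_hom.mat_hom_pow[OF cA])
    also have "\<dots> = (of_real c \<cdot>\<^sub>m ?Ac) ^\<^sub>m k" unfolding map_smult_real ..
    also have "\<dots> = Q * (of_real c \<cdot>\<^sub>m J) ^\<^sub>m k * Qi" by (rule similar_mat_wit_pow_id[OF sim2])
    also have "\<dots> $$ (i,j) = (\<Sum>b<d. (\<Sum>a<d. Q $$ (i,a) * ((of_real c \<cdot>\<^sub>m J) ^\<^sub>m k) $$ (a,b)) * Qi $$ (b,j))"
      by (rule triple_entry[OF Q _ Qi i j], insert J, auto)
    finally have ent: "complex_of_real (((c \<cdot>\<^sub>m A0) ^\<^sub>m k) $$ (i,j)) = \<dots>" .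
    let ?X = "(of_real c \<cdot>\<^sub>m J) ^\<^sub>m k"
    have e1: "(\<Sum>a<d. Q $$ (i,a) * (?X $$ (a,b) / fact k)) = (\<Sum>a<d. Q $$ (i,a) * ?X $$ (a,b)) / fact k" for b
      by (simp add: sum_divide_distrib)
    have "complex_of_real (g k) = complex_of_real (((c \<cdot>\<^sub>m A0) ^\<^sub>m k) $$ (i,j)) / fact k"
      unfolding g_def by simp
    also have "\<dots> = (\<Sum>b<d. (\<Sum>a<d. Q $$ (i,a) * ?X $$ (a,b)) * Qi $$ (b,j) / fact k)"
      unfolding ent by (rule sum_divide_distrib)
    also have "\<dots> = (\<Sum>b<d. (\<Sum>a<d. Q $$ (i,a) * (?X $$ (a,b) / fact k)) * Qi $$ (b,j))"
      unfolding e1 by (intro sum.cong refl, simp)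
    finally show ?thesis .
  qed
  have "(\<lambda>k. complex_of_real (g k)) sums S"
    unfolding gk S_def
  proof (intro sums_sum sums_mult2 sums_mult)
    fix a b assume "a \<in> {..<d}" "b \<in> {..<d}"
    then show "(\<lambda>k. ((of_real c \<cdot>\<^sub>m J) ^\<^sub>m k) $$ (a,b) / fact k) sums Mj J (of_real c) a b"
      using entry_sums[OF jp] by auto
  qed
  then have re: "g sums Re S" and im: "(\<lambda>k. 0) sums Im S"
    unfolding sums_complex_iff by auto
  have "Im S = 0" using im sums_unique[OF im] by simp
  then have S: "S = of_real (Re S)" by (simp add: complex_eq_iff)
  have "mat_exp (c \<cdot>\<^sub>m A0) $$ (i,j) = suminf g" unfolding mat_exp_def g_def using i j A0 by simp
  also have "\<dots> = Re S" using re by (simp add: sums_iff)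
  finally show ?thesis using S unfolding S_def by simp
qed


lemma jordan_diag_eig:
  fixes n_as :: "(nat \<times> complex) list"
  assumes sim: "similar_mat Ac (jordan_matrix n_as)" and Ac: "Ac \<in> carrier_mat d d"
    and a: "a < d"
  shows "eigenvalue Ac (jordan_matrix n_as $$ (a,a))"
proof -
  let ?J = "jordan_matrix n_as"
  have cpe: "char_poly Ac = char_poly ?J" by (rule char_poly_similar[OF sim])
  have Jd: "?J \<in> carrier_mat d d"
    using sim Ac unfolding similar_mat_def by (auto dest: similar_mat_witD2[OF Ac])
  have ut: "upper_triangular ?J" unfolding upper_triangular_def
    using jordan_matrix_upper_triangular[of _ n_as] by auto
  have cp: "char_poly ?J = (\<Prod>x\<leftarrow>diag_mat ?J. [:- x, 1:])"
    by (rule char_poly_upper_triangular[OF Jd ut])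
  have mem: "?J $$ (a,a) \<in> set (diag_mat ?J)" unfolding diag_mat_def using a Jd by auto
  have "poly (char_poly ?J) (?J $$ (a,a)) = 0" unfolding cp poly_prod_list
    using mem by (auto simp: prod_list_zero_iff)
  then show ?thesis unfolding eigenvalue_root_char_poly[OF Ac] cpe .
qed

lemma scalar_nsq: "x \<in> carrier_vec d \<Longrightarrow> nsq d (\<lambda>i. complex_of_real (x $ i)) = x \<bullet> x"
  unfolding nsq_def scalar_prod_def by (simp add: power2_eq_square atLeast0LessThan)

lemma per_Q_bound:
  fixes A0 :: "real mat" and t :: real
  assumes A0: "A0 \<in> carrier_mat d d" and d: "0 < d" and t: "0 \<le> t"
    and QJ: "Q \<in> jordan_transforms A0"
  shows "op_norm (mat_exp ((- t) \<cdot>\<^sub>m A0)) \<le> exp ((1 - kappa_re_min A0) * t)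
     * sqrt (kappa_max (Q * conj_transpose Q) / kappa_min (Q * conj_transpose Q))"
proof -
  let ?Ac = "map_mat complex_of_real A0"
  have Ac: "?Ac \<in> carrier_mat d d" using A0 by auto
  from QJ obtain n_as Qi where sim: "similar_mat_wit ?Ac (jordan_matrix n_as) Q Qi"
    unfolding jordan_transforms_def by auto
  let ?J = "jordan_matrix n_as"
  from similar_mat_witD2[OF Ac sim] have J: "?J \<in> carrier_mat d d" and Q: "Q \<in> carrier_mat d d"
    and Qi: "Qi \<in> carrier_mat d d" and QQi: "Q * Qi = 1\<^sub>m d" and QiQ: "Qi * Q = 1\<^sub>m d" by auto
  have sl: "sum_list (map fst n_as) = d" using J by auto
  have jp: "jprops ?J d"
    by (unfold_locales, rule J, insert jm_props[of _ n_as] sl, auto)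
  interpret qs: qsetup Q Qi d by (unfold_locales, rule Q, rule Qi, rule QQi, rule QiQ)
  let ?H = "Q * conj_transpose Q"
  have Hdef: "qs.H = ?H" unfolding qs.H_def ..
  let ?k = "kappa_re_min A0"
  have kap: "?k \<le> Re (?J $$ (a,a))" if a: "a < d" for a
  proof -
    have "eigenvalue ?Ac (?J $$ (a,a))"
      by (rule jordan_diag_eig[OF _ Ac a], unfold similar_mat_def, insert sim, auto)
    then show ?thesis unfolding kappa_re_min_def by (intro Min_le[OF finite_eig[OF Ac]], auto)
  qed
  have kminpos: "0 < kappa_min ?H" using qs.kmin_pos[OF d] unfolding Hdef .
  define E where "E = mat_exp ((- t) \<cdot>\<^sub>m A0)"
  have Edim: "dim_row E = d" "dim_col E = d" unfolding E_def mat_exp_def using A0 by auto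
  define C where "C = exp ((1 - ?k) * t)"
  define K where "K = sqrt (kappa_max ?H / kappa_min ?H)"
  have bound: "(E *\<^sub>v x) \<bullet> y \<le> C * K" if x: "x \<in> carrier_vec d" and y: "y \<in> carrier_vec d"
    and xx: "x \<bullet> x = 1" and yy: "y \<bullet> y = 1" for x y
  proof -
    define x' where "x' j = complex_of_real (x $ j)" for j
    define y' where "y' j = complex_of_real (y $ j)" for j
    define M where "M a b = Mj ?J (- complex_of_real t) a b" for a b
    define u where "u b = (\<Sum>j<d. Qi $$ (b,j) * x' j)" for b
    define w where "w a = (\<Sum>i<d. conj_transpose Q $$ (a,i) * y' i)" for a
    have Eent: "complex_of_real (E $$ (i,j)) = (\<Sum>b<d. (\<Sum>a<d. Q $$ (i,a) * M a b) * Qi $$ (b,j))"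
      if "i < d" "j < d" for i j
      unfolding E_def M_def using exp_entry[OF A0 sim jp that, of "- t"] by simp
    have inner: "(\<Sum>j<d. complex_of_real (E $$ (i,j)) * x' j) = (\<Sum>a<d. Q $$ (i,a) * (\<Sum>b<d. M a b * u b))" if i: "i < d" for i
    proof -
      have "(\<Sum>j<d. complex_of_real (E $$ (i,j)) * x' j) = (\<Sum>j<d. (\<Sum>b<d. (\<Sum>a<d. Q $$ (i,a) * M a b) * Qi $$ (b,j)) * x' j)"
        using Eent[OF i] by (intro sum.cong refl, auto)
      also have "\<dots> = (\<Sum>j<d. \<Sum>b<d. (\<Sum>a<d. Q $$ (i,a) * M a b) * (Qi $$ (b,j) * x' j))"
        by (simp add: sum_distrib_right mult.assoc)
      also have "\<dots> = (\<Sum>b<d. \<Sum>j<d. (\<Sum>a<d. Q $$ (i,a) * M a b) * (Qi $$ (b,j) * x' j))" by (rule sum.swap)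
      also have "\<dots> = (\<Sum>b<d. (\<Sum>a<d. Q $$ (i,a) * M a b) * u b)"
        unfolding u_def by (simp add: sum_distrib_left)
      also have "\<dots> = (\<Sum>b<d. \<Sum>a<d. Q $$ (i,a) * (M a b * u b))"
        by (simp add: sum_distrib_right mult.assoc)
      also have "\<dots> = (\<Sum>a<d. \<Sum>b<d. Q $$ (i,a) * (M a b * u b))" by (rule sum.swap)
      also have "\<dots> = (\<Sum>a<d. Q $$ (i,a) * (\<Sum>b<d. M a b * u b))" by (simp add: sum_distrib_left)
      finally show ?thesis .
    qed
    have "complex_of_real ((E *\<^sub>v x) \<bullet> y) = (\<Sum>i<d. (\<Sum>j<d. complex_of_real (E $$ (i,j)) * x' j) * y' i)"
      using x y Edim by (simp add: scalar_prod_def atLeast0LessThan x'_def y'_def)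
    also have "\<dots> = (\<Sum>i<d. (\<Sum>a<d. Q $$ (i,a) * (\<Sum>b<d. M a b * u b)) * y' i)"
      by (intro sum.cong refl, simp add: inner)
    also have "\<dots> = (\<Sum>i<d. \<Sum>a<d. (Q $$ (i,a) * y' i) * (\<Sum>b<d. M a b * u b))"
      by (intro sum.cong refl, subst sum_distrib_right, simp add: ac_simps)
    also have "\<dots> = (\<Sum>a<d. \<Sum>i<d. (Q $$ (i,a) * y' i) * (\<Sum>b<d. M a b * u b))" by (rule sum.swap)
    also have "\<dots> = (\<Sum>a<d. cnj (w a) * (\<Sum>b<d. M a b * u b))"
    proof (intro sum.cong refl)
      fix a assume "a \<in> {..<d}"
      then have a: "a < d" by auto
      have "cnj (w a) = (\<Sum>i<d. Q $$ (i,a) * y' i)"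
        unfolding w_def cnj_sum using Q a by (intro sum.cong refl, auto simp: y'_def)
      then show "(\<Sum>i<d. (Q $$ (i,a) * y' i) * (\<Sum>b<d. M a b * u b)) = cnj (w a) * (\<Sum>b<d. M a b * u b)"
        by (simp add: sum_distrib_right)
    qed
    also have "\<dots> = (\<Sum>a<d. \<Sum>b<d. cnj (w a) * M a b * u b)"
      by (simp add: sum_distrib_left mult.assoc)
    finally have eq: "complex_of_real ((E *\<^sub>v x) \<bullet> y) = (\<Sum>a<d. \<Sum>b<d. cnj (w a) * M a b * u b)" .
    have jb: "cmod (\<Sum>a<d. \<Sum>b<d. cnj (w a) * M a b * u b) \<le> C * (sqrt (nsq d u) * sqrt (nsq d w))"
      unfolding M_def C_def nsq_def by (rule jordan_bound[OF jp t kap])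
    have nw: "nsq d w \<le> kappa_max ?H"
      using qs.w_bound[of y'] scalar_nsq[OF y] yy unfolding w_def Hdef y'_def by simp
    have nu: "kappa_min ?H * nsq d u \<le> 1"
      using qs.u_bound[of x'] scalar_nsq[OF x] xx unfolding u_def Hdef x'_def by simp
    then have nu': "nsq d u \<le> 1 / kappa_min ?H" using kminpos by (simp add: field_simps)
    have "sqrt (nsq d u) * sqrt (nsq d w) \<le> sqrt (1 / kappa_min ?H) * sqrt (kappa_max ?H)"
    proof (rule mult_mono)
      show "sqrt (nsq d u) \<le> sqrt (1 / kappa_min ?H)" by (rule real_sqrt_le_mono[OF nu'])
      show "sqrt (nsq d w) \<le> sqrt (kappa_max ?H)" by (rule real_sqrt_le_mono[OF nw])
      show "0 \<le> sqrt (1 / kappa_min ?H)" using kminpos by simp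
      show "0 \<le> sqrt (nsq d w)" using nsq_nonneg[of d w] by simp
    qed
    also have "\<dots> = K" unfolding K_def by (simp add: real_sqrt_mult[symmetric] real_sqrt_divide)
    finally have sK: "sqrt (nsq d u) * sqrt (nsq d w) \<le> K" .
    have "(E *\<^sub>v x) \<bullet> y \<le> cmod (complex_of_real ((E *\<^sub>v x) \<bullet> y))" by simp
    also have "\<dots> \<le> C * (sqrt (nsq d u) * sqrt (nsq d w))" unfolding eq by (rule jb)
    also have "\<dots> \<le> C * K" using sK unfolding C_def by (intro mult_left_mono, auto)
    finally show ?thesis .
  qed
  have ne: "{(E *\<^sub>v x) \<bullet> y | x y. x \<in> carrier_vec (dim_col E) \<and> y \<in> carrier_vec (dim_row E) \<and> x \<bullet> x = 1 \<and> y \<bullet> y = 1} \<noteq> {}"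
  proof -
    have u1: "unit_vec d 0 \<bullet> unit_vec d 0 = (1::real)" using d by simp
    have "(E *\<^sub>v unit_vec d 0) \<bullet> unit_vec d 0 \<in> {(E *\<^sub>v x) \<bullet> y | x y. x \<in> carrier_vec (dim_col E) \<and> y \<in> carrier_vec (dim_row E) \<and> x \<bullet> x = 1 \<and> y \<bullet> y = 1}"
      unfolding mem_Collect_eq by (intro exI[of _ "unit_vec d 0"] conjI, insert u1 Edim, auto)
    then show ?thesis by (metis empty_iff)
  qed
  have "op_norm E \<le> C * K" unfolding op_norm_def
    by (rule cSup_least[OF ne], insert bound Edim, auto)
  then show ?thesis unfolding E_def C_def K_def .
qed


theorem lemma6p2:
  fixes A0 :: "real mat" and d :: nat and t :: real
  assumes "A0 \<in> carrier_mat d d" and "0 < d" and "0 \<le> t"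
  shows "op_norm (mat_exp ((- t) \<cdot>\<^sub>m A0))
           \<le> sqrt (L_const A0) * exp ((1 - kappa_re_min A0) * t)"
proof -
  note A0 = assms(1) and d = assms(2) and t = assms(3)
  define C where "C = exp ((1 - kappa_re_min A0) * t)"
  define N where "N = op_norm (mat_exp ((- t) \<cdot>\<^sub>m A0))"
  define R where "R = {kappa_max (Q * conj_transpose Q) / kappa_min (Q * conj_transpose Q) | Q. Q \<in> jordan_transforms A0}"
  have C0: "0 < C" unfolding C_def by simp
  have Rpos: "0 < r" if "r \<in> R" for r
  proof -
    from that obtain Q where QJ: "Q \<in> jordan_transforms A0"
      and r: "r = kappa_max (Q * conj_transpose Q) / kappa_min (Q * conj_transpose Q)"
      unfolding R_def by auto
    let ?Ac = "map_mat complex_of_real A0"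
    have Ac: "?Ac \<in> carrier_mat d d" using A0 by auto
    from QJ obtain n_as Qi where sim: "similar_mat_wit ?Ac (jordan_matrix n_as) Q Qi"
      unfolding jordan_transforms_def by auto
    from similar_mat_witD2[OF Ac sim] have Q: "Q \<in> carrier_mat d d"
      and Qi: "Qi \<in> carrier_mat d d" and QQi: "Q * Qi = 1\<^sub>m d" and QiQ: "Qi * Q = 1\<^sub>m d" by auto
    interpret qs: qsetup Q Qi d by (unfold_locales, rule Q, rule Qi, rule QQi, rule QiQ)
    let ?H = "Q * conj_transpose Q"
    have H: "?H \<in> carrier_mat d d" using Q by auto
    have kmin: "0 < kappa_min ?H" using qs.kmin_pos[OF d] unfolding qs.H_def .
    have fin: "finite {Re c | c. eigenvalue ?H c}" by (rule finite_eig[OF H])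
    obtain c where "eigenvalue ?H c" using exists_eig[OF H d] by auto
    then have ne: "{Re c | c. eigenvalue ?H c} \<noteq> {}" by auto
    have "kappa_min ?H \<le> kappa_max ?H" unfolding kappa_min_def kappa_max_def
      using Min_in[OF fin ne] Max_ge[OF fin] by auto
    then show ?thesis unfolding r using kmin by simp
  qed
  have Rne: "R \<noteq> {}"
  proof -
    let ?Ac = "map_mat complex_of_real A0"
    have Ac: "?Ac \<in> carrier_mat d d" using A0 by auto
    from char_poly_factorized[OF Ac] obtain as where "char_poly ?Ac = (\<Prod>a\<leftarrow>as. [:- a, 1:])" by auto
    from jordan_nf_exists[OF Ac this] obtain n_as where "jordan_nf ?Ac n_as" by auto
    then have "similar_mat ?Ac (jordan_matrix n_as)" unfolding jordan_nf_def by auto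
    then obtain P Pi where "similar_mat_wit ?Ac (jordan_matrix n_as) P Pi" unfolding similar_mat_def by auto
    then have "P \<in> jordan_transforms A0" unfolding jordan_transforms_def by auto
    then show ?thesis unfolding R_def by auto
  qed
  have bnd: "N \<le> C * sqrt r" if "r \<in> R" for r
  proof -
    from that obtain Q where QJ: "Q \<in> jordan_transforms A0"
      and r: "r = kappa_max (Q * conj_transpose Q) / kappa_min (Q * conj_transpose Q)"
      unfolding R_def by auto
    show ?thesis unfolding N_def C_def r by (rule per_Q_bound[OF A0 d t QJ])
  qed
  have L: "L_const A0 = Inf R" unfolding L_const_def R_def ..
  have Inf0: "0 \<le> Inf R" using Rpos by (intro cInf_greatest[OF Rne], force)
  show ?thesis
  proof (cases "N \<le> 0")
    case True
    have "0 \<le> sqrt (Inf R) * C" using Inf0 C0 by simp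
    then show ?thesis unfolding N_def[symmetric] C_def[symmetric] L using True by linarith
  next
    case False
    then have N0: "0 < N" by simp
    have "(N / C)\<^sup>2 \<le> r" if r: "r \<in> R" for r
    proof -
      have "N / C \<le> sqrt r" using bnd[OF r] C0 by (simp add: field_simps)
      then have "(N / C)\<^sup>2 \<le> (sqrt r)\<^sup>2" using N0 C0 by (intro power_mono, auto)
      then show ?thesis using Rpos[OF r] by simp
    qed
    then have "(N / C)\<^sup>2 \<le> Inf R" by (intro cInf_greatest[OF Rne])
    then have "N / C \<le> sqrt (Inf R)" by (rule real_le_rsqrt)
    then have "N \<le> sqrt (Inf R) * C" using C0 by (simp add: field_simps)
    then show ?thesis unfolding N_def C_def L .
  qed
qed


end
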